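(* Let $(F_n)_{n\ge0}$ be the Fibonacci numbers, $F_0=0$, $F_1=F_2=1$, $F_{n+2}=F_{n+1}+F_n$. Then for every $n\ge2$, $$F_{n-1}F_{\binom{n+1}{2}}=\left(F_{n-1}F_{n+1}+F_nF_{n-2}\right)F_{\binom{n}{2}}+\left(F_nF_{n-1}^2-F_{n-2}F_n^2\right)F_{\binom{n-1}{2}}.$$ *)

theory Defs
  imports "HOL-Number_Theory.Fib"
begin

end

theory Submission
  imports Defs
begin

lemma fibA: "int (fib (a + Suc k)) = int (fib (Suc k)) * int (fib (Suc a)) + int (fib k) * int (fib a)"
proof -
  have "fib (a + Suc k) = fib (Suc k) * fib (Suc a) + fib k * fib a"
    using fib_add[of a k] by simp
  then show ?thesis by (metis of_nat_add of_nat_mult)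
qed

lemma ch2: "(Suc n choose 2) = n + (n choose 2)"
  by (simp add: numeral_2_eq_2)

lemma alg: "\<And>x y z w A B::int. z = x + y \<Longrightarrow> w = z + y \<Longrightarrow>
     y * ((z*z + y*y) * B + (z*y + y*x) * A) =
     (y * w + z*x) * (y*B + x*A) + (z*y^2 - x*z^2) * A"
  by (simp add: algebra_simps power2_eq_square)

theorem mainTheorem9:
  fixes n :: nat
  assumes "n \<ge> 2"
  shows "int (fib (n - 1)) * int (fib ((n + 1) choose 2)) =
     (int (fib (n - 1)) * int (fib (n + 1)) + int (fib n) * int (fib (n - 2))) * int (fib (n choose 2))
   + (int (fib n) * int (fib (n - 1))^2 - int (fib (n - 2)) * int (fib n)^2) * int (fib ((n - 1) choose 2))"
proof -
  obtain m where n: "n = Suc (Suc m)" using assms by (metis Suc_le_D numeral_2_eq_2 Suc_le_mono)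
  define a where "a = (Suc m) choose 2"
  have e1: "(n - 1) choose 2 = a" by (simp add: n a_def)
  have e2: "n choose 2 = a + Suc m" by (simp add: n a_def ch2)
  have e3: "(n+1) choose 2 = a + Suc (Suc m + Suc m)"
  proof -
    have "Suc (Suc (Suc m)) choose 2 = Suc (Suc m) + (Suc m + (Suc m choose 2))"
      unfolding ch2[of "Suc (Suc m)"] ch2[of "Suc m"] ..
    moreover have "n + 1 = Suc (Suc (Suc m))" using n by simp
    ultimately have "(n+1) choose 2 = Suc (Suc m) + (Suc m + (Suc m choose 2))"
      by metis
    then show ?thesis by (simp add: a_def)
  qed
  have f2: "fib (Suc (m + Suc m)) = fib (Suc (Suc m)) * fib (Suc m) + fib (Suc m) * fib m"
    using fib_add[of m "Suc m"] by simp
  have f3: "fib (Suc (Suc m + Suc m)) = fib (Suc (Suc m)) * fib (Suc (Suc m)) + fib (Suc m) * fib (Suc m)"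
    using fib_add[of "Suc m" "Suc m"] by simp
  define x where "x = int (fib m)"
  define y where "y = int (fib (Suc m))"
  define z where "z = int (fib (Suc (Suc m)))"
  define w where "w = int (fib (Suc (Suc (Suc m))))"
  define A where "A = int (fib a)"
  define B where "B = int (fib (Suc a))"
  have hz: "z = x + y" unfolding x_def y_def z_def by simp
  have hw: "w = z + y" unfolding w_def y_def z_def by simp
  have L: "int (fib ((n + 1) choose 2)) = (z*z + y*y) * B + (z*y + y*x) * A"
  proof -
    have "int (fib ((n + 1) choose 2)) = int (fib (Suc (Suc m + Suc m))) * B + int (fib (Suc m + Suc m)) * A"
      unfolding e3 fibA B_def A_def ..
    moreover have "int (fib (Suc m + Suc m)) = z*y + y*x"
      using f2 unfolding y_def z_def x_def by (metis add_Suc of_nat_add of_nat_mult)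
    moreover have "int (fib (Suc (Suc m + Suc m))) = z*z + y*y"
      using f3 unfolding y_def z_def by (metis add_Suc of_nat_add of_nat_mult)
    ultimately show ?thesis by simp
  qed
  have R1: "int (fib (n choose 2)) = y*B + x*A"
    unfolding e2 fibA y_def B_def x_def A_def ..
  have n1: "n - 1 = Suc m" "n - 2 = m" "n + 1 = Suc (Suc (Suc m))" by (auto simp: n)
  have F: "int (fib (n - 1)) = y" "int (fib (n - 2)) = x" "int (fib (n+1)) = w" "int (fib n) = z"
    unfolding n1 x_def y_def w_def z_def n by simp_all
  show ?thesis
    unfolding L R1 e1 F A_def[symmetric] using alg[OF hz hw] by simp
qed

end
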